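(* Let $G$ be a signed digraph with vertex set $V$ such that all cycles of $G$ have the same sign, and let $f$ be a Boolean network on $G$ with a unique fixed point. Then there is a permutation $\pi$ of $V$ (viewed as a word of length $|V|$) such that every word containing $\pi$ synchronizes $f$. In particular, $\pi$ synchronizes $f$.
   Context: A signed digraph on $V$ is $(V,E)$ with $E\subseteq V\times V\times\{-1,1\}$; cycles have no repeated vertices (a loop is a cycle) and their sign is the product of arc signs. A Boolean network (BN) is $f:\{0,1\}^V\to\{0,1\}^V$; its signed interaction digraph has a positive (negative) arc from $j$ to $i$ iff for some $x$ with $x_j=0$, $f_i(x+e_j)-f_i(x)$ is positive (negative). A BN on $G$ is one whose signed interaction digraph is $G$. A word $u$ contains a word $v$ if $v$ can be obtained by deleting some letters of $u$. $f^i(x)$ is $x$ with $x_i$ replaced by $f_i(x)$; $f^{i_1\cdots i_\ell}=f^{i_\ell}\circ\cdots\circ f^{i_1}$; $w$ synchronizes $f$ if $f^w$ is constant. *)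

theory Defs
  imports Main "HOL-Library.Sublist"
begin

type_synonym 'v bn = "('v \<Rightarrow> bool) \<Rightarrow> ('v \<Rightarrow> bool)"
type_synonym 'v arc = "'v \<times> 'v \<times> int"

definition signed_digraph :: "'v arc set \<Rightarrow> bool" where
  "signed_digraph E \<longleftrightarrow> (\<forall>(j, i, s) \<in> E. s = 1 \<or> s = -1)"

definition is_cycle :: "'v arc set \<Rightarrow> 'v arc list \<Rightarrow> bool" where
  "is_cycle E c \<longleftrightarrow> c \<noteq> [] \<and> set c \<subseteq> E \<and> distinct (map fst c) \<and>
     (\<forall>t < length c. fst (snd (c ! t)) = fst (c ! ((t + 1) mod length c)))"

definition cycle_sign :: "'v arc list \<Rightarrow> int" where
  "cycle_sign c = prod_list (map (\<lambda>a. snd (snd a)) c)"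

text \<open>Signed interaction digraph of a Boolean network (False = 0, True = 1).\<close>
definition interaction_digraph :: "'v bn \<Rightarrow> 'v arc set" where
  "interaction_digraph f =
     {(j, i, 1) | j i. \<exists>x. \<not> x j \<and> \<not> f x i \<and> f (x(j := True)) i} \<union>
     {(j, i, -1) | j i. \<exists>x. \<not> x j \<and> f x i \<and> \<not> f (x(j := True)) i}"

text \<open>f^i and f^w (letters applied left to right).\<close>
definition upd1 :: "'v bn \<Rightarrow> 'v \<Rightarrow> ('v \<Rightarrow> bool) \<Rightarrow> ('v \<Rightarrow> bool)" where
  "upd1 f i x = x(i := f x i)"

definition upd_word :: "'v bn \<Rightarrow> 'v list \<Rightarrow> ('v \<Rightarrow> bool) \<Rightarrow> ('v \<Rightarrow> bool)" where
  "upd_word f w = fold (upd1 f) w"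

definition synchronizes :: "'v list \<Rightarrow> 'v bn \<Rightarrow> bool" where
  "synchronizes w f \<longleftrightarrow> (\<exists>c. \<forall>x. upd_word f w x = c)"

end

theory Submission
  imports Defs
begin

definition slice :: "'v set \<Rightarrow> ('v \<Rightarrow> bool) \<Rightarrow> ('v \<Rightarrow> bool) \<Rightarrow> bool" where
  "slice F a x \<longleftrightarrow> (\<forall>i\<in>F. x i = a i)"

definition closed :: "'v bn \<Rightarrow> 'v set \<Rightarrow> ('v \<Rightarrow> bool) \<Rightarrow> bool" where
  "closed f F a \<longleftrightarrow> (\<forall>x. slice F a x \<longrightarrow> (\<forall>i\<in>F. f x i = a i))"

definition sg :: "bool \<Rightarrow> int" where "sg b = (if b then -1 else 1)"

lemma sg_sq: "sg b * sg b = 1" by (simp add: sg_def)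
lemma sg_not: "sg (\<not> b) = - sg b" by (simp add: sg_def)

lemma arc_sign: "(j,i,s) \<in> interaction_digraph f \<Longrightarrow> s = 1 \<or> s = -1"
  unfolding interaction_digraph_def by auto

lemma arc_lemma:
  assumes "f (w(j := b)) i = a" "f (w(j := (\<not> b))) i = (\<not> a)"
  shows "(j, i, sg a * sg b) \<in> interaction_digraph f"
proof (cases b)
  case True
  let ?x = "w(j := False)"
  have e: "?x(j := True) = w(j := True)" by simp
  show ?thesis
  proof (cases a)
    case True
    have "\<exists>x. \<not> x j \<and> \<not> f x i \<and> f (x(j := True)) i"
      by (rule exI[of _ ?x]) (use assms \<open>b\<close> True e in auto)
    then show ?thesis using \<open>b\<close> True by (auto simp: interaction_digraph_def sg_def)
  next
    case False
    have "\<exists>x. \<not> x j \<and> f x i \<and> \<not> f (x(j := True)) i"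
      by (rule exI[of _ ?x]) (use assms \<open>b\<close> False e in auto)
    then show ?thesis using \<open>b\<close> False by (auto simp: interaction_digraph_def sg_def)
  qed
next
  case False
  let ?x = "w(j := False)"
  have e: "?x(j := True) = w(j := True)" by simp
  show ?thesis
  proof (cases a)
    case True
    have "\<exists>x. \<not> x j \<and> f x i \<and> \<not> f (x(j := True)) i"
      by (rule exI[of _ ?x]) (use assms \<open>\<not> b\<close> True e in auto)
    then show ?thesis using \<open>\<not> b\<close> True by (auto simp: interaction_digraph_def sg_def)
  next
    case False
    have "\<exists>x. \<not> x j \<and> \<not> f x i \<and> f (x(j := True)) i"
      by (rule exI[of _ ?x]) (use assms \<open>\<not> b\<close> False e in auto)
    then show ?thesis using \<open>\<not> b\<close> False by (auto simp: interaction_digraph_def sg_def)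
  qed
qed

lemma minflip:
  fixes f :: "('v::finite) bn"
  assumes "slice F a x" "slice F a z0" "f z0 i \<noteq> f x i"
  shows "\<exists>z j. slice F a z \<and> j \<notin> F \<and> z j \<noteq> x j \<and> f z i \<noteq> f x i \<and> f (z(j := x j)) i = f x i"
proof -
  let ?P = "\<lambda>z. slice F a z \<and> f z i \<noteq> f x i"
  let ?m = "\<lambda>z. card {j. z j \<noteq> x j}"
  obtain z where z: "?P z" and min: "\<forall>z'. ?P z' \<longrightarrow> ?m z \<le> ?m z'"
    using ex_has_least_nat[of ?P z0 ?m] assms by blast
  have "z \<noteq> x" using z by auto
  then obtain j where j: "z j \<noteq> x j" by auto
  have jF: "j \<notin> F" using j z assms(1) unfolding slice_def by auto
  let ?z' = "z(j := x j)"
  have s': "slice F a ?z'" using z assms(1) unfolding slice_def by auto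
  have "{k. ?z' k \<noteq> x k} = {k. z k \<noteq> x k} - {j}" by auto
  hence "?m ?z' = card ({k. z k \<noteq> x k} - {j})" by simp
  also have "\<dots> < ?m z" by (rule card_Diff1_less) (use j in auto)
  finally have "?m ?z' < ?m z" .
  hence "\<not> ?P ?z'" using min by (meson not_le)
  hence "f ?z' i = f x i" using s' by blast
  thus ?thesis using z jF j by blast
qed

fun wk :: "'v arc set \<Rightarrow> 'v \<Rightarrow> 'v \<Rightarrow> 'v arc list \<Rightarrow> bool" where
  "wk E a b [] = (a = b)"
| "wk E a b (e # es) = (fst e = a \<and> e \<in> E \<and> wk E (fst (snd e)) b es)"

lemma wk_append: "wk E a b (xs @ ys) \<longleftrightarrow> (\<exists>u. wk E a u xs \<and> wk E u b ys)"
  by (induction xs arbitrary: a) auto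

lemma wk_set: "wk E a b es \<Longrightarrow> set es \<subseteq> E"
  by (induction es arbitrary: a) auto

lemma wk_nth: "wk E a b es \<Longrightarrow> Suc t < length es \<Longrightarrow> fst (snd (es ! t)) = fst (es ! Suc t)"
proof (induction es arbitrary: a t)
  case Nil then show ?case by simp
next
  case (Cons e es)
  show ?case
  proof (cases t)
    case 0
    then show ?thesis using Cons.prems by (cases es) auto
  next
    case (Suc t')
    then show ?thesis using Cons.prems Cons.IH[of "fst (snd e)" t'] by auto
  qed
qed

lemma wk_hd: "wk E a b es \<Longrightarrow> es \<noteq> [] \<Longrightarrow> fst (es ! 0) = a"
  by (cases es) auto

lemma wk_last: "wk E a b es \<Longrightarrow> es \<noteq> [] \<Longrightarrow> fst (snd (es ! (length es - 1))) = b"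
proof (induction es arbitrary: a)
  case Nil then show ?case by simp
next
  case (Cons e es)
  then show ?case by (cases es) auto
qed

lemma wk_split: "wk E a b es \<Longrightarrow> p < length es \<Longrightarrow>
   wk E a (fst (es ! p)) (take p es) \<and> wk E (fst (es ! p)) b (drop p es)"
proof -
  assume w: "wk E a b es" and p: "p < length es"
  have "es = take p es @ drop p es" by simp
  then obtain u where u: "wk E a u (take p es)" "wk E u b (drop p es)"
    using w wk_append by metis
  have "drop p es \<noteq> []" using p by simp
  hence "fst (drop p es ! 0) = u" using wk_hd u(2) by metis
  hence "u = fst (es ! p)" using p by simp
  thus ?thesis using u by simp
qed

lemma wk_cycle: "wk E a a es \<Longrightarrow> es \<noteq> [] \<Longrightarrow> distinct (map fst es) \<Longrightarrow> is_cycle E es"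
proof -
  assume w: "wk E a a es" and ne: "es \<noteq> []" and d: "distinct (map fst es)"
  have "\<forall>t < length es. fst (snd (es ! t)) = fst (es ! ((t + 1) mod length es))"
  proof (intro allI impI)
    fix t assume t: "t < length es"
    show "fst (snd (es ! t)) = fst (es ! ((t + 1) mod length es))"
    proof (cases "Suc t < length es")
      case True
      then show ?thesis using wk_nth[OF w True] by simp
    next
      case False
      hence tt: "t = length es - 1" "Suc t = length es" using t by auto
      hence "(t + 1) mod length es = 0" by simp
      then show ?thesis using wk_last[OF w ne] wk_hd[OF w ne] tt(1) by simp
    qed
  qed
  thus ?thesis using ne d wk_set[OF w] unfolding is_cycle_def by auto
qed

lemma wk_split_closed:
  assumes w: "wk E a a es" and nd: "\<not> distinct (map fst es)"
  shows "\<exists>A B C u. es = A @ B @ C \<and> B \<noteq> [] \<and> length B < length es \<and> length (A @ C) < length es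
     \<and> wk E a u A \<and> wk E u u B \<and> wk E u a C"
proof -
  obtain p q where pq: "p < q" "q < length es" "fst (es ! p) = fst (es ! q)"
    using nd unfolding distinct_conv_nth by (auto simp: nat_neq_iff)
  define A where "A = take p es"
  define B where "B = take (q - p) (drop p es)"
  define C where "C = drop q es"
  have eq: "es = A @ B @ C" unfolding A_def B_def C_def
    by (metis append_take_drop_id drop_drop le_add_diff_inverse2 less_imp_le_nat pq(1))
  have s1: "wk E a (fst (es ! p)) A" "wk E (fst (es ! p)) a (drop p es)"
    using wk_split[OF w, of p] pq unfolding A_def by auto
  have "q - p < length (drop p es)" using pq by auto
  from wk_split[OF s1(2) this]
  have s2: "wk E (fst (es ! p)) (fst (drop p es ! (q - p))) B" "wk E (fst (drop p es ! (q - p))) a C"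
    unfolding B_def C_def using pq by auto
  have "drop p es ! (q - p) = es ! q" using pq by simp
  hence s3: "wk E (fst (es ! p)) (fst (es ! p)) B" "wk E (fst (es ! p)) a C" using s2 pq(3) by auto
  have "length B = q - p" unfolding B_def using pq by simp
  moreover have "length es = length A + length B + length C" using eq by simp
  ultimately show ?thesis using eq s1(1) s3 pq by (intro exI[of _ A] exI[of _ B] exI[of _ C]) auto
qed

lemma cycle_sign_append: "cycle_sign (xs @ ys) = cycle_sign xs * cycle_sign ys"
  by (simp add: cycle_sign_def)

lemma closed_walk_pos:
  assumes pos: "\<forall>c. is_cycle E c \<longrightarrow> cycle_sign c = 1"
  shows "wk E a a es \<Longrightarrow> cycle_sign es = 1"
proof (induction "length es" arbitrary: a es rule: less_induct)
  case less
  show ?case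
  proof (cases "es = []")
    case True then show ?thesis by (simp add: cycle_sign_def)
  next
    case ne: False
    show ?thesis
    proof (cases "distinct (map fst es)")
      case True
      then show ?thesis using wk_cycle[OF less.prems ne] pos by blast
    next
      case False
      from wk_split_closed[OF less.prems False] obtain A B C u where
        h: "es = A @ B @ C" "B \<noteq> []" "length B < length es" "length (A @ C) < length es"
          "wk E a u A" "wk E u u B" "wk E u a C" by blast
      have "wk E a a (A @ C)" using h wk_append by metis
      hence "cycle_sign (A @ C) = 1" using less.hyps h(4) by blast
      moreover have "cycle_sign B = 1" using less.hyps h(3) h(6) by blast
      ultimately show ?thesis using h(1) by (simp add: cycle_sign_append mult.commute mult.left_commute)
    qed
  qed
qed

lemma closed_walk_cycle:
  shows "wk E a a es \<Longrightarrow> es \<noteq> [] \<Longrightarrow> \<exists>u c. wk E u u c \<and> is_cycle E c \<and> set c \<subseteq> set es"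
proof (induction "length es" arbitrary: a es rule: less_induct)
  case less
  show ?case
  proof (cases "distinct (map fst es)")
    case True
    then show ?thesis using wk_cycle[OF less.prems] less.prems by blast
  next
    case False
    from wk_split_closed[OF less.prems(1) False] obtain A B C u where
      h: "es = A @ B @ C" "B \<noteq> []" "length B < length es"
        "wk E u u B" by blast
    from less.hyps[OF h(3) h(4) h(2)] show ?thesis using h(1) by auto
  qed
qed

lemma telescope:
  "wk E a b es \<Longrightarrow> (\<forall>e\<in>set es. snd (snd e) = sg (y (fst (snd e))) * sg (y (fst e))) \<Longrightarrow>
    cycle_sign es = sg (y a) * sg (y b)"
proof (induction es arbitrary: a)
  case Nil then show ?case by (simp add: cycle_sign_def sg_sq)
next
  case (Cons e es)
  obtain j i s where e: "e = (j, i, s)" by (cases e) auto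
  have "cycle_sign es = sg (y i) * sg (y b)" using Cons e by auto
  moreover have "s = sg (y i) * sg (y a)" using Cons.prems e by auto
  ultimately have "cycle_sign (e # es) = sg (y a) * (sg (y i) * sg (y i)) * sg (y b)"
    using e by (simp add: cycle_sign_def mult.commute mult.left_commute)
  then show ?case by (simp add: sg_sq)
qed

lemma wk_sign_pm: "wk (interaction_digraph f) a b es \<Longrightarrow> cycle_sign es = 1 \<or> cycle_sign es = -1"
proof (induction es arbitrary: a)
  case Nil then show ?case by (simp add: cycle_sign_def)
next
  case (Cons e es)
  obtain j i s where e: "e = (j, i, s)" by (cases e) auto
  have "(j,i,s) \<in> interaction_digraph f" using Cons.prems e by auto
  hence "s = 1 \<or> s = -1" by (rule arc_sign)
  moreover have "cycle_sign es = 1 \<or> cycle_sign es = -1" using Cons e by auto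
  ultimately show ?case using e by (auto simp: cycle_sign_def)
qed

lemma rtrancl_wk:
  assumes "(u, w) \<in> {(j,i). j \<notin> F \<and> i \<notin> F \<and> (\<exists>s. (j,i,s) \<in> E)}\<^sup>*"
  shows "\<exists>es. wk E u w es"
  using assms
proof (induction rule: rtrancl_induct)
  case base then show ?case by (intro exI[of _ "[]"]) simp
next
  case (step v w)
  then obtain es s where "wk E u v es" "(v, w, s) \<in> E" by auto
  hence "wk E u w (es @ [(v, w, s)])" by (auto simp: wk_append)
  then show ?case by blast
qed

lemma lemM:
  fixes f :: "('v::finite) bn"
  assumes pos: "\<forall>c. is_cycle (interaction_digraph f) c \<longrightarrow> cycle_sign c = 1"
    and cl: "closed f F a" and nF: "F \<noteq> UNIV"
    and nc: "\<forall>k x. k \<notin> F \<longrightarrow> slice F a x \<longrightarrow> (\<exists>z. slice F a z \<and> f z k \<noteq> f x k)"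
    and IH: "\<forall>F' a'. card (-F') < card (-F) \<longrightarrow> closed f F' a' \<longrightarrow> (\<exists>x. slice F' a' x \<and> f x = x)"
  shows "\<exists>x1 x2. slice F a x1 \<and> slice F a x2 \<and> f x1 = x1 \<and> f x2 = x2 \<and> x1 \<noteq> x2"
proof -
  define G where "G = interaction_digraph f"
  define R where "R = {(j,i). j \<notin> F \<and> i \<notin> F \<and> (\<exists>s. (j,i,s) \<in> G)}"
  define anc where "anc v = {u. (u,v) \<in> R\<^sup>*}" for v
  obtain v0 where "v0 \<notin> F" using nF by auto
  then obtain v where v: "v \<notin> F" and vmin: "\<forall>v'. v' \<notin> F \<longrightarrow> card (anc v) \<le> card (anc v')"
    using ex_has_least_nat[of "\<lambda>v. v \<notin> F" v0 "\<lambda>v. card (anc v)"] by blast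
  define H where "H = anc v"
  have HF: "\<forall>u\<in>H. u \<notin> F"
  proof
    fix u assume "u \<in> H"
    hence "(u, v) \<in> R\<^sup>*" by (simp add: H_def anc_def)
    thus "u \<notin> F" using v by (cases rule: converse_rtranclE) (auto simp: R_def)
  qed
  have vH: "v \<in> H" by (simp add: H_def anc_def)
  have bck: "\<forall>j i s. i \<in> H \<longrightarrow> j \<notin> F \<longrightarrow> (j,i,s) \<in> G \<longrightarrow> j \<in> H"
  proof (intro allI impI)
    fix j i s assume h: "i \<in> H" "j \<notin> F" "(j,i,s) \<in> G"
    hence "(j,i) \<in> R" using HF by (auto simp: R_def)
    moreover have "(i, v) \<in> R\<^sup>*" using h by (simp add: H_def anc_def)
    ultimately show "j \<in> H" by (simp add: H_def anc_def converse_rtrancl_into_rtrancl)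
  qed
  have sc: "\<forall>u\<in>H. (v,u) \<in> R\<^sup>*"
  proof
    fix u assume u: "u \<in> H"
    have sub: "anc u \<subseteq> anc v" using u by (auto simp: H_def anc_def)
    have "card (anc v) \<le> card (anc u)" using vmin HF u by blast
    hence "anc u = anc v" using sub by (metis card_seteq finite)
    moreover have "v \<in> anc v" by (simp add: anc_def)
    ultimately have "v \<in> anc u" by simp
    thus "(v,u) \<in> R\<^sup>*" by (simp add: anc_def)
  qed
  have toR: "\<And>u w. (u,w) \<in> R\<^sup>* \<Longrightarrow> \<exists>es. wk G u w es"
  proof -
    fix u w assume "(u,w) \<in> R\<^sup>*"
    thus "\<exists>es. wk G u w es" unfolding R_def by (rule rtrancl_wk)
  qed
  have cpos: "\<And>b es. wk G b b es \<Longrightarrow> cycle_sign es = 1"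
    unfolding G_def by (rule closed_walk_pos[OF pos])
  have pm: "\<And>b c es. wk G b c es \<Longrightarrow> cycle_sign es = 1 \<or> cycle_sign es = -1"
    unfolding G_def by (rule wk_sign_pm)
  define S where "S u = cycle_sign (SOME es. wk G v u es)" for u
  have consist: "\<And>u P. u \<in> H \<Longrightarrow> wk G v u P \<Longrightarrow> cycle_sign P = S u"
  proof -
    fix u P assume u: "u \<in> H" and P: "wk G v u P"
    obtain Q where Q: "wk G u v Q" using toR u by (auto simp: H_def anc_def)
    have key: "\<And>P'. wk G v u P' \<Longrightarrow> cycle_sign P' = cycle_sign Q"
    proof -
      fix P' assume P': "wk G v u P'"
      have "wk G v v (P' @ Q)" using P' Q wk_append by metis
      hence "cycle_sign P' * cycle_sign Q = 1" using cpos cycle_sign_append by metis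
      thus "cycle_sign P' = cycle_sign Q" using pm[OF P'] pm[OF Q] by auto
    qed
    have "wk G v u (SOME es. wk G v u es)" using P by (rule someI)
    thus "cycle_sign P = S u" using key[OF P] key unfolding S_def by metis
  qed
  define s where "s u = (S u \<noteq> 1)" for u
  have sgS: "\<And>u. u \<in> H \<Longrightarrow> sg (s u) = S u"
  proof -
    fix u assume u: "u \<in> H"
    obtain P where P: "wk G v u P" using toR sc u by blast
    have "S u = 1 \<or> S u = -1" using consist[OF u P] pm[OF P] by auto
    thus "sg (s u) = S u" by (auto simp: s_def sg_def)
  qed
  have sw: "\<forall>i j \<sigma>. i\<in>H \<longrightarrow> j\<in>H \<longrightarrow> (j,i,\<sigma>)\<in>G \<longrightarrow> \<sigma> = sg (s i) * sg (s j)"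
  proof (intro allI impI)
    fix i j \<sigma> assume h: "i\<in>H" "j\<in>H" "(j,i,\<sigma>)\<in>G"
    obtain P where P: "wk G v j P" using toR sc h by blast
    have "wk G v i (P @ [(j,i,\<sigma>)])" using P h by (auto simp: wk_append)
    hence e1: "cycle_sign (P @ [(j,i,\<sigma>)]) = S i" using consist h(1) by blast
    have e2: "cycle_sign P = S j" using consist h(2) P by blast
    have "cycle_sign (P @ [(j,i,\<sigma>)]) = cycle_sign P * \<sigma>" by (simp add: cycle_sign_append cycle_sign_def)
    hence "S i = S j * \<sigma>" using e1 e2 by simp
    hence "sg (s i) * sg (s j) = \<sigma> * (sg (s j) * sg (s j))" using sgS h by simp
    thus "\<sigma> = sg (s i) * sg (s j)" by (simp add: sg_sq)
  qed
  have stable: "\<And>t x i. (\<forall>i j \<sigma>. i\<in>H \<longrightarrow> j\<in>H \<longrightarrow> (j,i,\<sigma>)\<in>G \<longrightarrow> \<sigma> = sg (t i) * sg (t j)) \<Longrightarrow>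
      slice F a x \<Longrightarrow> (\<forall>u\<in>H. x u = t u) \<Longrightarrow> i \<in> H \<Longrightarrow> f x i = t i"
  proof (rule ccontr)
    fix t x i
    assume swt: "\<forall>i j \<sigma>. i\<in>H \<longrightarrow> j\<in>H \<longrightarrow> (j,i,\<sigma>)\<in>G \<longrightarrow> \<sigma> = sg (t i) * sg (t j)"
      and sl: "slice F a x" and ag: "\<forall>u\<in>H. x u = t u" and iH: "i \<in> H" and ne: "f x i \<noteq> t i"
    obtain z0 where z0: "slice F a z0" "f z0 i \<noteq> f x i" using nc HF iH sl by blast
    obtain z j where zj: "slice F a z" "j \<notin> F" "z j \<noteq> x j" "f z i \<noteq> f x i" "f (z(j := x j)) i = f x i"
      using minflip[of F a x z0 f i, OF sl z0(1) z0(2)] by blast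
    have "z(j := (\<not> x j)) = z" using zj(3) by (intro ext) auto
    hence "f (z(j := (\<not> x j))) i = (\<not> f x i)" using zj(4) by simp
    hence arc: "(j, i, sg (f x i) * sg (x j)) \<in> G" using arc_lemma[of f z j "x j" i "f x i", OF zj(5)] unfolding G_def by blast
    have jH: "j \<in> H" using bck arc iH zj(2) by blast
    have "sg (f x i) * sg (x j) = sg (t i) * sg (t j)" using swt arc iH jH by blast
    moreover have "f x i = (\<not> t i)" "x j = t j" using ne ag jH by auto
    ultimately have "- (sg (t i) * sg (t j)) = sg (t i) * sg (t j)" by (simp add: sg_not)
    thus False by (simp add: sg_def split: if_splits)
  qed
  have fp: "\<And>t. (\<forall>i j \<sigma>. i\<in>H \<longrightarrow> j\<in>H \<longrightarrow> (j,i,\<sigma>)\<in>G \<longrightarrow> \<sigma> = sg (t i) * sg (t j)) \<Longrightarrow>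
      \<exists>x. slice F a x \<and> f x = x \<and> x v = t v"
  proof -
    fix t assume swt: "\<forall>i j \<sigma>. i\<in>H \<longrightarrow> j\<in>H \<longrightarrow> (j,i,\<sigma>)\<in>G \<longrightarrow> \<sigma> = sg (t i) * sg (t j)"
    define F' where "F' = F \<union> H"
    define a' where "a' u = (if u \<in> H then t u else a u)" for u
    have sl: "\<And>x. slice F' a' x \<Longrightarrow> slice F a x \<and> (\<forall>u\<in>H. x u = t u)"
      using HF by (auto simp: slice_def F'_def a'_def)
    have "closed f F' a'"
      unfolding closed_def
    proof (intro allI impI ballI)
      fix x i assume x: "slice F' a' x" and i: "i \<in> F'"
      show "f x i = a' i"
      proof (cases "i \<in> H")
        case True
        then show ?thesis using stable[OF swt] sl[OF x] by (simp add: a'_def)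
      next
        case False
        then show ?thesis using cl sl[OF x] i by (auto simp: closed_def F'_def a'_def)
      qed
    qed
    moreover have "card (-F') < card (-F)"
    proof (rule psubset_card_mono)
      show "finite (-F)" by simp
      show "-F' \<subset> -F" using vH v unfolding F'_def by blast
    qed
    ultimately obtain x where x: "slice F' a' x" "f x = x" using IH by blast
    thus "\<exists>x. slice F a x \<and> f x = x \<and> x v = t v" using sl[OF x(1)] vH by blast
  qed
  obtain x1 where x1: "slice F a x1" "f x1 = x1" "x1 v = s v" using fp[OF sw] by blast
  have sw2: "\<forall>i j \<sigma>. i\<in>H \<longrightarrow> j\<in>H \<longrightarrow> (j,i,\<sigma>)\<in>G \<longrightarrow> \<sigma> = sg (\<not> s i) * sg (\<not> s j)"
    using sw by (simp add: sg_not)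
  obtain x2 where x2: "slice F a x2" "f x2 = x2" "x2 v = (\<not> s v)" using fp[of "\<lambda>u. \<not> s u", OF sw2] by blast
  have "x1 \<noteq> x2" using x1(3) x2(3) by auto
  thus ?thesis using x1 x2 by blast
qed


lemma uw_append: "upd_word f (u @ w) x = upd_word f w (upd_word f u x)"
  by (simp add: upd_word_def)

lemma uw_Cons: "upd_word f (k # w) x = upd_word f w (upd1 f k x)"
  by (simp add: upd_word_def)

lemma uw_slice: "closed f F a \<Longrightarrow> slice F a x \<Longrightarrow> slice F a (upd_word f w x)"
proof (induction w arbitrary: x)
  case Nil then show ?case by (simp add: upd_word_def)
next
  case (Cons k w)
  have "slice F a (upd1 f k x)"
    using Cons.prems unfolding slice_def closed_def upd1_def by auto
  then show ?case using Cons.IH Cons.prems(1) by (simp add: uw_Cons)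
qed

lemma uw_fix: "f y = y \<Longrightarrow> upd_word f w y = y"
proof (induction w)
  case Nil then show ?case by (simp add: upd_word_def)
next
  case (Cons k w)
  have "upd1 f k y = y" using Cons.prems by (simp add: upd1_def)
  then show ?case using Cons by (simp add: uw_Cons)
qed

lemma card_insert_less:
  fixes F :: "('v::finite) set"
  assumes "k \<notin> F" shows "card (- insert k F) < card (- F)"
proof -
  have "- insert k F = -F - {k}" by auto
  moreover have "card (-F - {k}) < card (-F)" by (rule card_Diff1_less) (use assms in auto)
  ultimately show ?thesis by simp
qed

lemma lemE:
  fixes f :: "('v::finite) bn"
  assumes pos: "\<forall>c. is_cycle (interaction_digraph f) c \<longrightarrow> cycle_sign c = 1"
  shows "closed f F a \<Longrightarrow> \<exists>x. slice F a x \<and> f x = x"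
proof (induction "card (-F)" arbitrary: F a rule: less_induct)
  case less
  show ?case
  proof (cases "F = UNIV")
    case True
    have "f a = a"
    proof
      fix i show "f a i = a i" using less.prems True by (auto simp: closed_def slice_def)
    qed
    thus ?thesis by (auto simp: slice_def)
  next
    case nF: False
    show ?thesis
    proof (cases "\<exists>k c. k \<notin> F \<and> (\<forall>x. slice F a x \<longrightarrow> f x k = c)")
      case True
      then obtain k c where k: "k \<notin> F" "\<forall>x. slice F a x \<longrightarrow> f x k = c" by blast
      define F' where "F' = insert k F"
      define a' where "a' = a(k := c)"
      have sl: "\<And>x. slice F' a' x \<Longrightarrow> slice F a x" using k(1) by (auto simp: slice_def F'_def a'_def)
      have "closed f F' a'" unfolding closed_def
      proof (intro allI impI ballI)
        fix x i assume x: "slice F' a' x" "i \<in> F'"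
        show "f x i = a' i"
        proof (cases "i = k")
          case True then show ?thesis using k(2) sl[OF x(1)] by (simp add: a'_def)
        next
          case False then show ?thesis using less.prems sl[OF x(1)] x(2)
            by (auto simp: closed_def F'_def a'_def)
        qed
      qed
      moreover have "card (-F') < card (-F)" unfolding F'_def using k(1) by (rule card_insert_less)
      ultimately obtain x where "slice F' a' x" "f x = x" using less.hyps by blast
      thus ?thesis using sl by blast
    next
      case False
      have nc: "\<forall>k x. k \<notin> F \<longrightarrow> slice F a x \<longrightarrow> (\<exists>z. slice F a z \<and> f z k \<noteq> f x k)"
        using False by blast
      have IH: "\<forall>F' a'. card (-F') < card (-F) \<longrightarrow> closed f F' a' \<longrightarrow> (\<exists>x. slice F' a' x \<and> f x = x)"
        using less.hyps by blast
      from lemM[OF pos less.prems nF nc IH] show ?thesis by blast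
    qed
  qed
qed

primrec wlist :: "('v \<Rightarrow> 'v) \<Rightarrow> ('v \<Rightarrow> int) \<Rightarrow> 'v \<Rightarrow> nat \<Rightarrow> 'v arc list" where
  "wlist p l u 0 = []"
| "wlist p l u (Suc n) = (((p^^(Suc n)) u, (p^^n) u, l ((p^^n) u)) # wlist p l u n)"

lemma iter_in: "\<forall>i\<in>U. p i \<in> U \<Longrightarrow> u \<in> U \<Longrightarrow> (p^^n) u \<in> U"
  by (induction n) auto

lemma wlist_wk:
  assumes "\<forall>i\<in>U. p i \<in> U \<and> (p i, i, l i) \<in> E" "u \<in> U"
  shows "wk E ((p^^n) u) u (wlist p l u n) \<and> (\<forall>e\<in>set (wlist p l u n). \<exists>i\<in>U. e = (p i, i, l i))
     \<and> length (wlist p l u n) = n"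
proof (induction n)
  case 0 then show ?case by simp
next
  case (Suc n)
  have "(p^^n) u \<in> U" using iter_in[of U p u n] assms by blast
  then show ?case using Suc assms by auto
qed

lemma main_ind:
  fixes f :: "('v::finite) bn"
  assumes same: "\<forall>c1 c2. is_cycle (interaction_digraph f) c1 \<and> is_cycle (interaction_digraph f) c2 \<longrightarrow> cycle_sign c1 = cycle_sign c2"
    and fy: "f y = y" and uniq: "\<forall>x. f x = x \<longrightarrow> x = y"
  shows "closed f F y \<Longrightarrow> \<exists>\<pi>. distinct \<pi> \<and> set \<pi> = -F \<and>
     (\<forall>w. subseq \<pi> w \<longrightarrow> (\<forall>x. slice F y x \<longrightarrow> upd_word f w x = y))"
proof (induction "card (-F)" arbitrary: F rule: less_induct)
  case less
  show ?case
  proof (cases "F = UNIV")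
    case True
    have "\<forall>x. slice F y x \<longrightarrow> x = y" using True by (auto simp: slice_def)
    thus ?thesis using uw_fix[of f y, OF fy] True by (intro exI[of _ "[]"]) auto
  next
    case nF: False
    show ?thesis
    proof (cases "\<exists>k c. k \<notin> F \<and> (\<forall>x. slice F y x \<longrightarrow> f x k = c)")
      case True
      then obtain k c where k: "k \<notin> F" "\<forall>x. slice F y x \<longrightarrow> f x k = c" by blast
      have "slice F y y" by (simp add: slice_def)
      hence c: "c = y k" using k(2) fy by metis
      define F' where "F' = insert k F"
      have sl: "\<And>x. slice F' y x \<Longrightarrow> slice F y x" by (auto simp: slice_def F'_def)
      have clF': "closed f F' y" unfolding closed_def
      proof (intro allI impI ballI)
        fix x i assume x: "slice F' y x" "i \<in> F'"
        show "f x i = y i"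
        proof (cases "i = k")
          case True then show ?thesis using k(2) sl[OF x(1)] c by simp
        next
          case False then show ?thesis using less.prems sl[OF x(1)] x(2)
            by (auto simp: closed_def F'_def)
        qed
      qed
      have card: "card (-F') < card (-F)" unfolding F'_def using k(1) by (rule card_insert_less)
      obtain \<pi>' where \<pi>': "distinct \<pi>'" "set \<pi>' = -F'"
          "\<forall>w. subseq \<pi>' w \<longrightarrow> (\<forall>x. slice F' y x \<longrightarrow> upd_word f w x = y)"
        using less.hyps[OF card clF'] by blast
      show ?thesis
      proof (intro exI[of _ "k # \<pi>'"] conjI allI impI)
        show "distinct (k # \<pi>')" using \<pi>' by (auto simp: F'_def)
        show "set (k # \<pi>') = -F" using \<pi>' k by (auto simp: F'_def)
        fix w x assume w: "subseq (k # \<pi>') w" and x: "slice F y x"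
        obtain us vs where uv: "w = us @ k # vs" "subseq \<pi>' vs" using list_emb_ConsD[OF w] by auto
        let ?x1 = "upd_word f us x"
        have s1: "slice F y ?x1" using uw_slice[OF less.prems x] .
        have "upd1 f k ?x1 = ?x1(k := y k)" using k(2) s1 c by (simp add: upd1_def)
        hence s2: "slice F' y (upd1 f k ?x1)" using s1 by (auto simp: slice_def F'_def)
        have "upd_word f w x = upd_word f vs (upd1 f k ?x1)" using uv by (simp add: uw_append uw_Cons)
        thus "upd_word f w x = y" using \<pi>'(3) uv(2) s2 by simp
      qed
    next
      case False
      have nc: "\<forall>k x. k \<notin> F \<longrightarrow> slice F y x \<longrightarrow> (\<exists>z. slice F y z \<and> f z k \<noteq> f x k)"
        using False by blast
      have sy: "slice F y y" by (simp add: slice_def)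
      have pred: "\<forall>i. \<exists>j. i \<notin> F \<longrightarrow> j \<notin> F \<and> (j, i, sg (y i) * sg (y j)) \<in> interaction_digraph f"
      proof
        fix i
        show "\<exists>j. i \<notin> F \<longrightarrow> j \<notin> F \<and> (j, i, sg (y i) * sg (y j)) \<in> interaction_digraph f"
        proof (cases "i \<in> F")
          case True then show ?thesis by blast
        next
          case False
          obtain z0 where z0: "slice F y z0" "f z0 i \<noteq> f y i" using nc False sy by blast
          obtain z j where zj: "slice F y z" "j \<notin> F" "z j \<noteq> y j" "f z i \<noteq> f y i" "f (z(j := y j)) i = f y i"
            using minflip[of F y y z0 f i, OF sy z0(1) z0(2)] by blast
          have "z(j := (\<not> y j)) = z" using zj(3) by (intro ext) auto
          hence "f (z(j := (\<not> y j))) i = (\<not> f y i)" using zj(4) by simp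
          hence "(j, i, sg (f y i) * sg (y j)) \<in> interaction_digraph f"
            using arc_lemma[of f z j "y j" i "f y i", OF zj(5)] by blast
          thus ?thesis using zj(2) fy by auto
        qed
      qed
      then obtain p where p: "\<forall>i. i \<notin> F \<longrightarrow> p i \<notin> F \<and> (p i, i, sg (y i) * sg (y (p i))) \<in> interaction_digraph f"
        by metis
      define l where "l i = sg (y i) * sg (y (p i))" for i
      have pU: "\<forall>i\<in>-F. p i \<in> -F \<and> (p i, i, l i) \<in> interaction_digraph f" using p by (simp add: l_def)
      obtain u0 where u0: "u0 \<notin> F" using nF by auto
      have ninj: "\<not> inj (\<lambda>n::nat. (p^^n) u0)"
      proof
        assume inj: "inj (\<lambda>n::nat. (p^^n) u0)"
        have "finite (range (\<lambda>n::nat. (p^^n) u0))" by simp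
        hence "finite (UNIV :: nat set)" using finite_imageD inj by blast
        thus False by simp
      qed
      obtain a b where ab: "a < b" "(p^^a) u0 = (p^^b) u0"
        using ninj unfolding inj_def by (metis nat_neq_iff)
      define u' where "u' = (p^^a) u0"
      define N where "N = b - a"
      have "(p^^N) u' = (p^^(N + a)) u0" unfolding u'_def by (simp add: funpow_add)
      also have "N + a = b" using ab unfolding N_def by simp
      finally have cyc: "(p^^N) u' = u'" using ab unfolding u'_def by simp
      have u'F: "u' \<in> -F" unfolding u'_def using iter_in[of "-F" p u0 a] pU u0 by blast
      have W: "wk (interaction_digraph f) ((p^^N) u') u' (wlist p l u' N) \<and>
           (\<forall>e\<in>set (wlist p l u' N). \<exists>i\<in>-F. e = (p i, i, l i)) \<and> length (wlist p l u' N) = N"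
        by (rule wlist_wk[OF pU u'F])
      have Npos: "N > 0" using ab unfolding N_def by simp
      have "wk (interaction_digraph f) u' u' (wlist p l u' N)" "wlist p l u' N \<noteq> []"
        using W cyc Npos by auto
      from closed_walk_cycle[OF this] obtain u c where
        uc: "wk (interaction_digraph f) u u c" "is_cycle (interaction_digraph f) c" "set c \<subseteq> set (wlist p l u' N)"
        by blast
      have lab: "\<forall>e\<in>set c. snd (snd e) = sg (y (fst (snd e))) * sg (y (fst e))"
        using uc(3) W by (fastforce simp: l_def)
      have "cycle_sign c = sg (y u) * sg (y u)" using telescope[OF uc(1) lab] .
      hence "cycle_sign c = 1" by (simp add: sg_sq)
      hence pos: "\<forall>c. is_cycle (interaction_digraph f) c \<longrightarrow> cycle_sign c = 1"
        using same uc(2) by metis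
      have IH: "\<forall>F' a'. card (-F') < card (-F) \<longrightarrow> closed f F' a' \<longrightarrow> (\<exists>x. slice F' a' x \<and> f x = x)"
        using lemE[OF pos] by blast
      from lemM[OF pos less.prems nF nc IH] obtain x1 x2 where
        "f x1 = x1" "f x2 = x2" "x1 \<noteq> x2" by blast
      thus ?thesis using uniq by blast
    qed
  qed
qed

theorem proposition7:
  fixes G :: "('v::finite) arc set" and f :: "'v bn"
  assumes "signed_digraph G"
    and "\<forall>c1 c2. is_cycle G c1 \<and> is_cycle G c2 \<longrightarrow> cycle_sign c1 = cycle_sign c2"
    and "interaction_digraph f = G"
    and "\<exists>!x. f x = x"
  shows "\<exists>\<pi>. distinct \<pi> \<and> set \<pi> = UNIV \<and> length \<pi> = card (UNIV :: 'v set) \<and>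
           (\<forall>w. subseq \<pi> w \<longrightarrow> synchronizes w f) \<and> synchronizes \<pi> f"
proof -
  obtain y where fy: "f y = y" and uniq: "\<forall>x. f x = x \<longrightarrow> x = y" using assms(4) by blast
  have same: "\<forall>c1 c2. is_cycle (interaction_digraph f) c1 \<and> is_cycle (interaction_digraph f) c2 \<longrightarrow> cycle_sign c1 = cycle_sign c2"
    using assms(2,3) by simp
  have "closed f {} y" by (simp add: closed_def)
  from main_ind[OF same fy uniq this] obtain \<pi> where
    \<pi>: "distinct \<pi>" "set \<pi> = UNIV" "\<forall>w. subseq \<pi> w \<longrightarrow> (\<forall>x. upd_word f w x = y)"
    by (auto simp: slice_def)
  have len: "length \<pi> = card (UNIV :: 'v set)" using distinct_card[OF \<pi>(1)] \<pi>(2) by simp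
  have sync: "\<forall>w. subseq \<pi> w \<longrightarrow> synchronizes w f" using \<pi>(3) unfolding synchronizes_def by blast
  have "subseq \<pi> \<pi>" by (rule list_emb_refl) simp
  thus ?thesis using \<pi>(1,2) len sync by blast
qed

end
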